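(* Fix $M\in\mathbb{R}$. For all $m\le M$, all probability distributions $\nu\in\mathcal{D}_{m,M}$ and all $\mu>\mathbb{E}(\nu)$, \[ \mathcal{K}_{\inf}(\nu,\mu,\mathcal{D}_{m,M})=\mathcal{K}_{\inf}(\nu,\mu,\mathcal{D}_{-\infty,M}). \]
   Context: $\mathcal{D}_{m,M}$ is the set of probability distributions on $\mathbb{R}$ supported on $[m,M]$; $\mathcal{D}_{-\infty,M}$ is the set of probability distributions with a first moment supported on $(-\infty,M]$. $\mathbb{E}(\nu)$ denotes the mean of $\nu$. For a distribution $\nu$, $x\in\mathbb{R}$ and a set of distributions $\mathcal{D}$, $\mathcal{K}_{\inf}(\nu,x,\mathcal{D})=\inf\{\mathrm{KL}(\nu,\nu'):\nu'\in\mathcal{D},\ \mathbb{E}(\nu')>x\}$, with the infimum of the empty set equal to $+\infty$; $\mathrm{KL}(\nu,\nu')=\int\ln(d\nu/d\nu')\,d\nu$ if $\nu\ll\nu'$ and $+\infty$ otherwise. *)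

theory Defs
  imports "HOL-Probability.Probability"
begin

definition real_distr :: "real measure \<Rightarrow> bool" where
  "real_distr \<nu> \<longleftrightarrow> prob_space \<nu> \<and> sets \<nu> = sets borel"

definition D_bdd :: "real \<Rightarrow> real \<Rightarrow> real measure set" where
  "D_bdd m M = {\<nu>. real_distr \<nu> \<and> emeasure \<nu> {m..M} = 1}"

definition D_upper :: "real \<Rightarrow> real measure set" where
  "D_upper M = {\<nu>. real_distr \<nu> \<and> integrable \<nu> (\<lambda>x. x) \<and> emeasure \<nu> {..M} = 1}"

definition mean :: "real measure \<Rightarrow> real" where
  "mean \<nu> = integral\<^sup>L \<nu> (\<lambda>x. x)"

text \<open>KL(nu, nu') = integral of ln(d nu / d nu') d nu if nu << nu', +infinity otherwise.
  The integral is taken in the extended sense: positive part minus negative part.\<close>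
definition KL :: "real measure \<Rightarrow> real measure \<Rightarrow> ereal" where
  "KL \<nu> \<nu>' =
    (if absolutely_continuous \<nu>' \<nu> then
       (let f = (\<lambda>x. enn2real (RN_deriv \<nu>' \<nu> x)) in
          enn2ereal (\<integral>\<^sup>+ x. ennreal (ln (f x)) \<partial>\<nu>)
          - enn2ereal (\<integral>\<^sup>+ x. ennreal (- ln (f x)) \<partial>\<nu>))
     else \<infinity>)"

text \<open>K_inf(nu, x, D) = inf {KL(nu,nu') : nu' in D, E(nu') > x}; Inf {} = +infinity in ereal.\<close>
definition Kinf :: "real measure \<Rightarrow> real \<Rightarrow> real measure set \<Rightarrow> ereal" where
  "Kinf \<nu> x D = Inf {KL \<nu> \<nu>' | \<nu>'. \<nu>' \<in> D \<and> mean \<nu>' > x}"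

end

theory Submission imports Defs begin

lemma meas_sets: assumes "sets N = sets (borel::real measure)"
  shows "f \<in> borel_measurable N \<longleftrightarrow> f \<in> borel_measurable (borel::real measure)"
  by (metis measurable_cong_sets[OF assms refl])

lemma key:
  fixes m M :: real and \<nu> \<nu>' :: "real measure"
  assumes mM: "m \<le> M" and nu: "\<nu> \<in> D_bdd m M" and nu': "\<nu>' \<in> D_upper M"
    and ac: "absolutely_continuous \<nu>' \<nu>"
  shows "\<exists>\<nu>''\<in>D_bdd m M. mean \<nu>'' \<ge> mean \<nu>' \<and> KL \<nu> \<nu>'' \<le> KL \<nu> \<nu>'"
proof -
  have Pn: "prob_space \<nu>" and Sn: "sets \<nu> = sets borel" and n1: "emeasure \<nu> {m..M} = 1"
    using nu by (auto simp: D_bdd_def real_distr_def)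
  have Pn': "prob_space \<nu>'" and Sn': "sets \<nu>' = sets borel" and int': "integrable \<nu>' (\<lambda>x. x)"
    and n'1: "emeasure \<nu>' {..M} = 1"
    using nu' by (auto simp: D_upper_def real_distr_def)
  interpret n: prob_space \<nu> by fact
  interpret n': prob_space \<nu>' by fact
  have spn: "space \<nu> = UNIV" using sets_eq_imp_space_eq[OF Sn] by simp
  have spn': "space \<nu>' = UNIV" using sets_eq_imp_space_eq[OF Sn'] by simp
  define T where "T = (\<lambda>x::real. max x m)"
  have Tm: "T \<in> measurable \<nu>' borel" unfolding T_def by (rule meas_sets[OF Sn', THEN iffD2]) measurable
  define \<nu>'' where "\<nu>'' = distr \<nu>' borel T"
  have Sn'': "sets \<nu>'' = sets borel" unfolding \<nu>''_def by simp
  have spn'': "space \<nu>'' = UNIV" unfolding \<nu>''_def by simp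
  have Pn'': "prob_space \<nu>''" unfolding \<nu>''_def by (rule n'.prob_space_distr[OF Tm])
  interpret n'': prob_space \<nu>'' by fact
  have "emeasure \<nu>'' {m..M} = emeasure \<nu>' (T -` {m..M} \<inter> space \<nu>')"
    unfolding \<nu>''_def by (rule emeasure_distr[OF Tm]) simp
  also have "T -` {m..M} \<inter> space \<nu>' = {..M}" using mM by (auto simp: T_def spn')
  finally have n''1: "emeasure \<nu>'' {m..M} = 1" using n'1 by simp
  have D'': "\<nu>'' \<in> D_bdd m M" using Pn'' Sn'' n''1 by (simp add: D_bdd_def real_distr_def)
  have "mean \<nu>'' = integral\<^sup>L \<nu>' T" unfolding mean_def \<nu>''_def
    by (subst integral_distr[OF Tm]) auto
  also have "integral\<^sup>L \<nu>' T \<ge> integral\<^sup>L \<nu>' (\<lambda>x. x)"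
  proof (rule integral_mono[OF int'])
    show "integrable \<nu>' T" unfolding T_def
      by (intro integrable_max int') simp
  qed (auto simp: T_def)
  finally have mean'': "mean \<nu>'' \<ge> mean \<nu>'" unfolding mean_def .

  have Sn_eq: "sets \<nu> = sets \<nu>'" using Sn Sn' by simp
  have AEm: "AE x in \<nu>. x \<in> {m..M}"
    using n.AE_in_set_eq_1[of "{m..M}"] n1 Sn by (simp add: n.emeasure_eq_measure)
  define g where "g = RN_deriv \<nu>' \<nu>"
  have gm[measurable]: "g \<in> borel_measurable \<nu>'" unfolding g_def by simp
  have gm2: "g \<in> borel_measurable borel" by (rule meas_sets[OF Sn', THEN iffD1, OF gm])
  have dens': "density \<nu>' g = \<nu>" unfolding g_def by (rule n'.density_RN_deriv[OF ac Sn_eq])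
  have gfin: "AE x in \<nu>. g x \<noteq> \<infinity>"
  proof -
    have "AE x in \<nu>'. g x \<noteq> \<infinity>" unfolding g_def
      by (rule n'.RN_deriv_finite[OF _ ac Sn_eq]) (rule n.sigma_finite_measure_axioms)
    then show ?thesis using dens'[symmetric] AE_density[OF gm] by (metis (mono_tags, lifting) AE_mp AE_I2)
  qed
  define d where "d = emeasure \<nu>' {..m}"
  define c where "c = emeasure \<nu> {m} / d"
  define h where "h = (\<lambda>x. if m < x then g x else c)"
  have hm: "h \<in> borel_measurable borel" unfolding h_def using gm2 by measurable
  have hm'': "h \<in> borel_measurable \<nu>''" by (rule meas_sets[OF Sn'', THEN iffD2, OF hm])
  have cd: "c * d = emeasure \<nu> {m}"
  proof (cases "d = 0")
    case True
    then have "emeasure \<nu> {..m} = 0" using absolutely_continuousD[OF ac] Sn' unfolding d_def by simp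
    then have "emeasure \<nu> {m} = 0" using emeasure_mono[of "{m}" "{..m}" \<nu>] Sn by simp
    then show ?thesis using True by simp
  next
    case False
    have "d \<noteq> \<top>" unfolding d_def by simp
    then show ?thesis unfolding c_def using False
      by (simp add: ennreal_divide_times ennreal_divide_self top.not_eq_extremum)
  qed
  have dens'': "density \<nu>'' h = \<nu>"
  proof (rule measure_eqI)
    show "sets (density \<nu>'' h) = sets \<nu>" using Sn Sn'' by simp
    fix A assume "A \<in> sets (density \<nu>'' h)"
    then have A: "A \<in> sets borel" using Sn'' by simp
    have "emeasure (density \<nu>'' h) A = (\<integral>\<^sup>+x. h x * indicator A x \<partial>\<nu>'')"
      by (rule emeasure_density[OF hm'']) (simp add: Sn'' A)
    also have "\<dots> = (\<integral>\<^sup>+x. h (T x) * indicator A (T x) \<partial>\<nu>')"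
      unfolding \<nu>''_def by (rule nn_integral_distr[OF Tm]) (use hm A in measurable)
    also have "\<dots> = (\<integral>\<^sup>+x. g x * indicator (A \<inter> {m<..}) x + (c * indicator A m) * indicator {..m} x \<partial>\<nu>')"
      by (intro nn_integral_cong) (auto simp: h_def T_def indicator_def max_def)
    also have "\<dots> = (\<integral>\<^sup>+x. g x * indicator (A \<inter> {m<..}) x \<partial>\<nu>') + (\<integral>\<^sup>+x. (c * indicator A m) * indicator {..m} x \<partial>\<nu>')"
    proof (rule nn_integral_add)
      have "(\<lambda>x. g x * indicator (A \<inter> {m<..}) x) \<in> borel_measurable borel" using gm2 A by measurable
      then show "(\<lambda>x. g x * indicator (A \<inter> {m<..}) x) \<in> borel_measurable \<nu>'"
        by (rule meas_sets[OF Sn', THEN iffD2])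
      have "(\<lambda>x. (c * indicator A m) * indicator {..m} x) \<in> borel_measurable borel" by measurable
      then show "(\<lambda>x. (c * indicator A m) * indicator {..m} x :: ennreal) \<in> borel_measurable \<nu>'"
        by (rule meas_sets[OF Sn', THEN iffD2])
    qed
    also have "(\<integral>\<^sup>+x. (c * indicator A m) * indicator {..m} x \<partial>\<nu>') = (c * indicator A m) * d"
      unfolding d_def by (rule nn_integral_cmult_indicator) (simp add: Sn')
    also have "(\<integral>\<^sup>+x. g x * indicator (A \<inter> {m<..}) x \<partial>\<nu>') = emeasure \<nu> (A \<inter> {m<..})"
    proof -
      have "A \<inter> {m<..} \<in> sets \<nu>'" using A Sn' by simp
      then show ?thesis using emeasure_density[OF gm, of "A \<inter> {m<..}"] dens' by simp
    qed
    also have "(c * indicator A m) * d = emeasure \<nu> (A \<inter> {m})"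
    proof (cases "m \<in> A")
      case True
      then have "A \<inter> {m} = {m}" by auto
      then show ?thesis using True cd by (simp add: mult.commute mult.left_commute)
    next
      case False
      then have "A \<inter> {m} = {}" by auto
      then show ?thesis using False by simp
    qed
    also have "emeasure \<nu> (A \<inter> {m<..}) + emeasure \<nu> (A \<inter> {m}) = emeasure \<nu> (A \<inter> {m<..} \<union> A \<inter> {m})"
      by (rule plus_emeasure) (use A Sn in auto)
    also have "A \<inter> {m<..} \<union> A \<inter> {m} = A \<inter> {m..}" by auto
    also have "emeasure \<nu> (A \<inter> {m..}) = emeasure \<nu> A"
    proof (rule emeasure_eq_AE)
      show "AE x in \<nu>. (x \<in> A \<inter> {m..}) = (x \<in> A)" using AEm by (rule AE_mp) (auto intro!: AE_I2)
    qed (use A Sn in auto)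
    finally show "emeasure (density \<nu>'' h) A = emeasure \<nu> A" .
  qed

  have ac'': "absolutely_continuous \<nu>'' \<nu>"
    using absolutely_continuousI_density[OF hm''] dens'' by simp
  have AEtr: "AE x in \<nu>. P x" if "AE x in \<nu>''. P x" for P
  proof -
    have "AE x in density \<nu>'' h. P x" using that AE_density[OF hm'', of P] by (auto elim: AE_mp)
    then show ?thesis by (simp only: dens'')
  qed
  have RN'': "AE x in \<nu>. h x = RN_deriv \<nu>'' \<nu> x"
    by (rule AEtr, rule n''.RN_deriv_unique[OF hm'' dens''])
  have hpos: "AE x in \<nu>. 0 < h x"
  proof -
    have "AE x in density \<nu>'' h. 0 < h x" using AE_density[OF hm'', of "\<lambda>x. 0 < h x"] by simp
    then show ?thesis by (simp only: dens'')
  qed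
  have cle: "c \<le> g m"
  proof -
    have "emeasure \<nu> {m} = (\<integral>\<^sup>+x. g x * indicator {m} x \<partial>\<nu>')"
      using emeasure_density[OF gm, of "{m}"] dens' Sn' by simp
    also have "\<dots> = (\<integral>\<^sup>+x. g m * indicator {m} x \<partial>\<nu>')"
      by (intro nn_integral_cong) (simp add: indicator_def)
    also have "\<dots> = g m * emeasure \<nu>' {m}"
      by (rule nn_integral_cmult_indicator) (simp add: Sn')
    also have "\<dots> \<le> g m * d" unfolding d_def
      by (intro mult_left_mono emeasure_mono) (auto simp: Sn')
    finally have le: "emeasure \<nu> {m} \<le> g m * d" .
    show ?thesis
    proof (cases "d = 0")
      case True
      then have "emeasure \<nu> {..m} = 0" using absolutely_continuousD[OF ac] Sn' unfolding d_def by simp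
      then have "emeasure \<nu> {m} = 0" using emeasure_mono[of "{m}" "{..m}" \<nu>] Sn by simp
      then show ?thesis unfolding c_def by simp
    next
      case False
      have "d < \<top>" unfolding d_def by (simp add: less_top[symmetric])
      have "c \<le> g m * d / d" unfolding c_def by (rule divide_right_mono_ennreal[OF le])
      also have "\<dots> = g m" using False \<open>d < \<top>\<close> by (simp add: ennreal_mult_divide_eq)
      finally show ?thesis .
    qed
  qed
  have hle: "AE x in \<nu>. h x \<le> g x"
    using AEm by (rule AE_mp) (auto intro!: AE_I2 simp: h_def cle)
  have lnle: "AE x in \<nu>. ln (enn2real (RN_deriv \<nu>'' \<nu> x)) \<le> ln (enn2real (RN_deriv \<nu>' \<nu> x))"
    using RN'' hpos hle gfin
  proof eventually_elim
    case (elim x)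
    have "h x < \<top>" using elim by (simp add: top.not_eq_extremum le_less_trans)
    then have p: "0 < enn2real (h x)" using elim by (simp add: enn2real_positive_iff)
    have "enn2real (h x) \<le> enn2real (g x)" using elim by (intro enn2real_mono) (auto simp: top.not_eq_extremum)
    then show ?case using p elim(1) unfolding g_def by simp
  qed
  have KLle: "KL \<nu> \<nu>'' \<le> KL \<nu> \<nu>'"
    unfolding KL_def Let_def using ac ac''
    apply simp
    apply (rule ereal_minus_mono)
    subgoal unfolding less_eq_ennreal.rep_eq[symmetric] using lnle by (intro nn_integral_mono_AE) (auto elim!: eventually_mono intro!: ennreal_leI)
    subgoal unfolding less_eq_ennreal.rep_eq[symmetric] using lnle by (intro nn_integral_mono_AE) (auto elim!: eventually_mono intro!: ennreal_leI)
    done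
  show ?thesis using D'' mean'' KLle by blast
qed
lemma D_sub: "D_bdd m M \<subseteq> D_upper M"
proof
  fix \<nu> assume nu: "\<nu> \<in> D_bdd m M"
  have Pn: "prob_space \<nu>" and Sn: "sets \<nu> = sets borel" and n1: "emeasure \<nu> {m..M} = 1"
    using nu by (auto simp: D_bdd_def real_distr_def)
  interpret n: prob_space \<nu> by fact
  have AEm: "AE x in \<nu>. x \<in> {m..M}"
    using n.AE_in_set_eq_1[of "{m..M}"] n1 Sn by (simp add: n.emeasure_eq_measure)
  have "AE x in \<nu>. norm x \<le> \<bar>m\<bar> + \<bar>M\<bar>" using AEm by (rule AE_mp) (auto intro!: AE_I2)
  moreover have "(\<lambda>x::real. x) \<in> borel_measurable \<nu>" by (rule meas_sets[OF Sn, THEN iffD2]) simp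
  ultimately have "integrable \<nu> (\<lambda>x. x)" by (rule n.integrable_const_bound)
  moreover have "emeasure \<nu> {..M} = 1"
  proof (rule antisym)
    show "emeasure \<nu> {..M} \<le> 1" by (rule n.emeasure_le_1)
    have "emeasure \<nu> {m..M} \<le> emeasure \<nu> {..M}" by (rule emeasure_mono) (auto simp: Sn)
    then show "1 \<le> emeasure \<nu> {..M}" using n1 by simp
  qed
  ultimately show "\<nu> \<in> D_upper M" using Pn Sn by (simp add: D_upper_def real_distr_def)
qed

theorem proposition1:
  fixes M m \<mu> :: real and \<nu> :: "real measure"
  assumes "m \<le> M"
    and "\<nu> \<in> D_bdd m M"
    and "\<mu> > mean \<nu>"
  shows "Kinf \<nu> \<mu> (D_bdd m M) = Kinf \<nu> \<mu> (D_upper M)"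
  unfolding Kinf_def
proof (rule antisym)
  show "Inf {KL \<nu> \<nu>' |\<nu>'. \<nu>' \<in> D_upper M \<and> \<mu> < mean \<nu>'} \<le> Inf {KL \<nu> \<nu>' |\<nu>'. \<nu>' \<in> D_bdd m M \<and> \<mu> < mean \<nu>'}"
    using D_sub by (intro Inf_superset_mono) blast
  show "Inf {KL \<nu> \<nu>' |\<nu>'. \<nu>' \<in> D_bdd m M \<and> \<mu> < mean \<nu>'} \<le> Inf {KL \<nu> \<nu>' |\<nu>'. \<nu>' \<in> D_upper M \<and> \<mu> < mean \<nu>'}"
  proof (rule Inf_greatest)
    fix y assume "y \<in> {KL \<nu> \<nu>' |\<nu>'. \<nu>' \<in> D_upper M \<and> \<mu> < mean \<nu>'}"
    then obtain \<nu>' where y: "y = KL \<nu> \<nu>'" and nu': "\<nu>' \<in> D_upper M" and mu: "\<mu> < mean \<nu>'" by blast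
    show "Inf {KL \<nu> \<nu>' |\<nu>'. \<nu>' \<in> D_bdd m M \<and> \<mu> < mean \<nu>'} \<le> y"
    proof (cases "absolutely_continuous \<nu>' \<nu>")
      case True
      from key[OF assms(1,2) nu' True] obtain \<nu>'' where
        "\<nu>'' \<in> D_bdd m M" "mean \<nu>'' \<ge> mean \<nu>'" "KL \<nu> \<nu>'' \<le> KL \<nu> \<nu>'" by blast
      then have "KL \<nu> \<nu>'' \<in> {KL \<nu> \<nu>' |\<nu>'. \<nu>' \<in> D_bdd m M \<and> \<mu> < mean \<nu>'}" using mu by force
      then have "Inf {KL \<nu> \<nu>' |\<nu>'. \<nu>' \<in> D_bdd m M \<and> \<mu> < mean \<nu>'} \<le> KL \<nu> \<nu>''" by (rule Inf_lower)
      then show ?thesis using y \<open>KL \<nu> \<nu>'' \<le> KL \<nu> \<nu>'\<close> by simp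
    next
      case False
      then show ?thesis using y by (simp add: KL_def)
    qed
  qed
qed

end
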